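(* Let $\mathbf A\in\mathbb C^{m\times m}$ with $\operatorname{Ind}\mathbf A=k$ and $\operatorname{rank}\mathbf A^{k+1}=\operatorname{rank}\mathbf A^{k}=r\le m$, let $\mathbf B\in\mathbb C^{n\times m}$, and let $\check{\mathbf B}=\mathbf B\mathbf A^{k}$ with $i$-th row $\check{\mathbf b}_{i.}$. Then the Drazin inverse solution $\mathbf X=\mathbf B\mathbf A^{D}=(x_{ij})\in\mathbb C^{n\times m}$ of $\mathbf X\mathbf A=\mathbf B$ satisfies, for all $i=1,\dots,n$, $j=1,\dots,m$, \[x_{ij}=\frac{\sum_{\alpha\in I_{r,m}\{j\}}\left|\left(\mathbf A^{k+1}_{j.}(\check{\mathbf b}_{i.})\right)^{\alpha}_{\alpha}\right|}{\sum_{\alpha\in I_{r,m}}\left|(\mathbf A^{k+1})^{\alpha}_{\alpha}\right|}.\]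
   Context: $\operatorname{Ind}\mathbf A$ is the smallest nonnegative $k$ with $\operatorname{rank}\mathbf A^{k+1}=\operatorname{rank}\mathbf A^{k}$; the Drazin inverse $\mathbf A^{D}$ is the unique $\mathbf X$ with $\mathbf A^{k+1}\mathbf X=\mathbf A^{k}$, $\mathbf X\mathbf A\mathbf X=\mathbf X$, $\mathbf A\mathbf X=\mathbf X\mathbf A$. $\mathbf M_{j.}(\mathbf c)$ denotes $\mathbf M$ with its $j$-th row replaced by the row vector $\mathbf c$. $I_{r,m}$ is the set of strictly increasing sequences of $r$ elements of $\{1,\dots,m\}$, $I_{r,m}\{j\}=\{\alpha\in I_{r,m}:j\in\alpha\}$, $\mathbf M^{\alpha}_{\alpha}$ is the principal submatrix indexed by $\alpha$, $|\cdot|$ is the determinant. *)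

theory Defs
  imports "Jordan_Normal_Form.DL_Rank_Submatrix" "Jordan_Normal_Form.Determinant"
begin

(* rank of a complex matrix (column rank; rows = vector dimension) *)
definition crank :: "complex mat \<Rightarrow> nat" where
  "crank A = vec_space.rank (dim_row A) A"

definition mat_ind :: "complex mat \<Rightarrow> nat" where
  "mat_ind A = (LEAST k. crank (A ^\<^sub>m (k+1)) = crank (A ^\<^sub>m k))"

definition is_drazin_inverse :: "complex mat \<Rightarrow> complex mat \<Rightarrow> bool" where
  "is_drazin_inverse A X \<longleftrightarrow> X \<in> carrier_mat (dim_row A) (dim_row A) \<and>
     A ^\<^sub>m (mat_ind A + 1) * X = A ^\<^sub>m (mat_ind A) \<and> X * A * X = X \<and> A * X = X * A"

definition drazin :: "complex mat \<Rightarrow> complex mat" where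
  "drazin A = (THE X. is_drazin_inverse A X)"

(* M_{j.}(c): M with its j-th row replaced by the row vector c *)
definition replace_row :: "'a mat \<Rightarrow> nat \<Rightarrow> 'a vec \<Rightarrow> 'a mat" where
  "replace_row M j c = mat (dim_row M) (dim_col M) (\<lambda>(a,b). if a = j then c $ b else M $$ (a,b))"

definition principal_submatrix :: "'a mat \<Rightarrow> nat set \<Rightarrow> 'a mat" where
  "principal_submatrix M \<alpha> = submatrix M \<alpha> \<alpha>"

definition Irm :: "nat \<Rightarrow> nat \<Rightarrow> nat set set" where
  "Irm r m = {\<alpha>. \<alpha> \<subseteq> {..<m} \<and> card \<alpha> = r}"

end

theory Submission
  imports Defs
begin

definition pmask :: "'a::{zero,one} mat \<Rightarrow> nat set \<Rightarrow> 'a mat" where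
  "pmask Y S = mat (dim_row Y) (dim_col Y) (\<lambda>(i,j). if i \<in> S \<and> j \<in> S then Y $$ (i,j) else if i = j then 1 else 0)"

lemma permutes_fix_outside:
  assumes "p permutes {0..<m}" "S \<subseteq> {0..<m}" "\<forall>i\<in>{0..<m}-S. p i = i"
  shows "p permutes S"
  using assms unfolding permutes_def by blast

lemma det_pmask_perm:
  fixes Y :: "'a::comm_ring_1 mat"
  assumes Y: "Y \<in> carrier_mat m m" and S: "S \<subseteq> {0..<m}"
  shows "det (pmask Y S) = (\<Sum>p\<in>{p. p permutes S}. signof p * (\<Prod>i\<in>S. Y $$ (i, p i)))"
proof -
  have M: "pmask Y S \<in> carrier_mat m m" using Y unfolding pmask_def by auto
  have ent: "\<And>i j. i < m \<Longrightarrow> j < m \<Longrightarrow> pmask Y S $$ (i,j) = (if i \<in> S \<and> j \<in> S then Y $$ (i,j) else if i = j then 1 else 0)"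
    using Y unfolding pmask_def by auto
  have "det (pmask Y S) = (\<Sum>p\<in>{p. p permutes {0..<m}}. signof p * (\<Prod>i=0..<m. pmask Y S $$ (i, p i)))"
    using det_def'[OF M] .
  also have "\<dots> = (\<Sum>p\<in>{p. p permutes S}. signof p * (\<Prod>i=0..<m. pmask Y S $$ (i, p i)))"
  proof (rule sum.mono_neutral_right)
    show "finite {p. p permutes {0..<m}}" by (simp add: finite_permutations)
    show "{p. p permutes S} \<subseteq> {p. p permutes {0..<m}}" using S permutes_subset by blast
    show "\<forall>p\<in>{p. p permutes {0..<m}} - {p. p permutes S}. signof p * (\<Prod>i = 0..<m. pmask Y S $$ (i, p i)) = 0"
    proof
      fix p assume "p \<in> {p. p permutes {0..<m}} - {p. p permutes S}"
      hence p: "p permutes {0..<m}" and np: "\<not> p permutes S" by auto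
      then obtain i where i: "i \<in> {0..<m} - S" "p i \<noteq> i" using permutes_fix_outside[OF p S] by blast
      have pi: "p i < m" using p i permutes_in_image by fastforce
      have "pmask Y S $$ (i, p i) = 0" using i pi ent by auto
      hence "(\<Prod>i = 0..<m. pmask Y S $$ (i, p i)) = 0" using i by (intro prod_zero) auto
      thus "signof p * (\<Prod>i = 0..<m. pmask Y S $$ (i, p i)) = 0" by simp
    qed
  qed
  also have "\<dots> = (\<Sum>p\<in>{p. p permutes S}. signof p * (\<Prod>i\<in>S. Y $$ (i, p i)))"
  proof (rule sum.cong[OF refl])
    fix p assume "p \<in> {p. p permutes S}"
    hence p: "p permutes S" by auto
    have "(\<Prod>i=0..<m. pmask Y S $$ (i, p i)) = (\<Prod>i\<in>S. pmask Y S $$ (i, p i))"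
    proof (rule prod.mono_neutral_right)
      show "finite {0..<m}" by simp
      show "S \<subseteq> {0..<m}" by fact
      show "\<forall>i\<in>{0..<m} - S. pmask Y S $$ (i, p i) = 1"
        using p ent permutes_not_in by fastforce
    qed
    also have "\<dots> = (\<Prod>i\<in>S. Y $$ (i, p i))"
    proof (rule prod.cong[OF refl])
      fix i assume i: "i \<in> S"
      have "p i \<in> S" using i permutes_in_image[OF p] by auto
      have "i < m" "p i < m" using i \<open>p i \<in> S\<close> S by auto
      thus "pmask Y S $$ (i, p i) = Y $$ (i, p i)" using i \<open>p i \<in> S\<close> ent by simp
    qed
    finally show "signof p * (\<Prod>i=0..<m. pmask Y S $$ (i, p i)) = signof p * (\<Prod>i\<in>S. Y $$ (i, p i))" by simp
  qed
  finally show ?thesis .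
qed

lemma det_diag_plus:
  fixes Y :: "'a::comm_ring_1 mat"
  assumes Y: "Y \<in> carrier_mat m m"
  shows "det (mat m m (\<lambda>(i,j). (if i = j then x i else 0) + Y $$ (i,j))) =
    (\<Sum>S\<in>Pow {0..<m}. (\<Prod>i\<in>{0..<m}-S. x i) * det (pmask Y S))"
proof -
  let ?M = "mat m m (\<lambda>(i,j). (if i = j then x i else 0) + Y $$ (i,j))"
  have M: "?M \<in> carrier_mat m m" by auto
  let ?P = "{p. p permutes {0..<m}}"
  have "det ?M = (\<Sum>p\<in>?P. signof p * (\<Prod>i=0..<m. Y $$ (i, p i) + (if i = p i then x i else 0)))"
    unfolding det_def'[OF M]
    by (intro sum.cong refl arg_cong2[where f="(*)"] prod.cong, insert permutes_in_image, fastforce+)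
  also have "\<dots> = (\<Sum>p\<in>?P. signof p * (\<Sum>X\<in>Pow {0..<m}. (\<Prod>i\<in>X. Y $$ (i, p i)) * (\<Prod>i\<in>{0..<m}-X. (if i = p i then x i else 0))))"
    by (subst prod_add) auto
  also have "\<dots> = (\<Sum>p\<in>?P. \<Sum>X\<in>Pow {0..<m}. signof p * ((\<Prod>i\<in>X. Y $$ (i, p i)) * (\<Prod>i\<in>{0..<m}-X. (if i = p i then x i else 0))))"
    by (simp add: sum_distrib_left)
  also have "\<dots> = (\<Sum>X\<in>Pow {0..<m}. \<Sum>p\<in>?P. signof p * ((\<Prod>i\<in>X. Y $$ (i, p i)) * (\<Prod>i\<in>{0..<m}-X. (if i = p i then x i else 0))))"
    by (rule sum.swap)
  also have "\<dots> = (\<Sum>X\<in>Pow {0..<m}. (\<Prod>i\<in>{0..<m}-X. x i) * det (pmask Y X))"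
  proof (rule sum.cong[OF refl])
    fix X assume X: "X \<in> Pow {0..<m}"
    hence XS: "X \<subseteq> {0..<m}" by auto
    have "(\<Sum>p\<in>?P. signof p * ((\<Prod>i\<in>X. Y $$ (i, p i)) * (\<Prod>i\<in>{0..<m}-X. (if i = p i then x i else 0))))
      = (\<Sum>p\<in>{p. p permutes X}. signof p * ((\<Prod>i\<in>X. Y $$ (i, p i)) * (\<Prod>i\<in>{0..<m}-X. (if i = p i then x i else 0))))"
    proof (rule sum.mono_neutral_right)
      show "finite ?P" by (simp add: finite_permutations)
      show "{p. p permutes X} \<subseteq> ?P" using XS permutes_subset by blast
      show "\<forall>p\<in>?P - {p. p permutes X}. signof p * ((\<Prod>i\<in>X. Y $$ (i, p i)) * (\<Prod>i\<in>{0..<m}-X. (if i = p i then x i else 0))) = 0"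
      proof
        fix p assume "p \<in> ?P - {p. p permutes X}"
        hence p: "p permutes {0..<m}" and np: "\<not> p permutes X" by auto
        then obtain i where i: "i \<in> {0..<m} - X" "p i \<noteq> i" using permutes_fix_outside[OF p XS] by blast
        have "(\<Prod>i\<in>{0..<m}-X. (if i = p i then x i else 0)) = 0"
          using i by (intro prod_zero) (auto intro!: bexI[of _ i])
        thus "signof p * ((\<Prod>i\<in>X. Y $$ (i, p i)) * (\<Prod>i\<in>{0..<m}-X. (if i = p i then x i else 0))) = 0" by simp
      qed
    qed
    also have "\<dots> = (\<Sum>p\<in>{p. p permutes X}. (\<Prod>i\<in>{0..<m}-X. x i) * (signof p * (\<Prod>i\<in>X. Y $$ (i, p i))))"
    proof (rule sum.cong[OF refl])
      fix p assume "p \<in> {p. p permutes X}"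
      hence p: "p permutes X" by auto
      have "(\<Prod>i\<in>{0..<m}-X. (if i = p i then x i else 0)) = (\<Prod>i\<in>{0..<m}-X. x i)"
        using p permutes_not_in by (intro prod.cong) fastforce+
      thus "signof p * ((\<Prod>i\<in>X. Y $$ (i, p i)) * (\<Prod>i\<in>{0..<m}-X. (if i = p i then x i else 0))) =
          (\<Prod>i\<in>{0..<m}-X. x i) * (signof p * (\<Prod>i\<in>X. Y $$ (i, p i)))" by (simp add: ac_simps)
    qed
    also have "\<dots> = (\<Prod>i\<in>{0..<m}-X. x i) * det (pmask Y X)"
      unfolding det_pmask_perm[OF Y XS] by (simp add: sum_distrib_left)
    finally show "(\<Sum>p\<in>?P. signof p * ((\<Prod>i\<in>X. Y $$ (i, p i)) * (\<Prod>i\<in>{0..<m}-X. (if i = p i then x i else 0))))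
      = (\<Prod>i\<in>{0..<m}-X. x i) * det (pmask Y X)" .
  qed
  finally show ?thesis .
qed


lemma pick_bij:
  assumes "finite S"
  shows "bij_betw (pick S) {0..<card S} S"
proof -
  have inj: "inj_on (pick S) {0..<card S}"
  proof
    fix a b assume a: "a \<in> {0..<card S}" and b: "b \<in> {0..<card S}" and e: "pick S a = pick S b"
    have "a = card {x\<in>S. x < pick S a}" using card_pick_le[of a S] a by auto
    also have "\<dots> = b" using card_pick_le[of b S] b e by auto
    finally show "a = b" .
  qed
  have sub: "pick S ` {0..<card S} \<subseteq> S" using pick_in_set_le by auto
  have "card (pick S ` {0..<card S}) = card S" using card_image[OF inj] by simp
  hence "pick S ` {0..<card S} = S" using card_subset_eq[OF assms sub] by simp
  thus ?thesis using inj unfolding bij_betw_def by auto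
qed

lemma det_submatrix_pmask:
  fixes Y :: "'a::comm_ring_1 mat"
  assumes Y: "Y \<in> carrier_mat m m" and S: "S \<subseteq> {0..<m}"
  shows "det (submatrix Y S S) = det (pmask Y S)"
proof -
  have fin: "finite S" using S finite_subset by blast
  define s where "s = card S"
  have cs: "card {i. i < m \<and> i \<in> S} = s" unfolding s_def using S by (intro arg_cong[where f=card]) auto
  have SM: "submatrix Y S S \<in> carrier_mat s s" using Y cs unfolding submatrix_def by auto
  have ent: "\<And>a b. a < s \<Longrightarrow> b < s \<Longrightarrow> submatrix Y S S $$ (a,b) = Y $$ (pick S a, pick S b)"
    using Y cs unfolding submatrix_def by auto
  define f where "f = pick S"
  have bf: "bij_betw f {0..<s} S" unfolding f_def s_def using pick_bij[OF fin] .
  have inj: "inj_on f {0..<s}" using bij_betw_imp_inj_on[OF bf] .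
  have fA: "f ` {0..<s} = S" using bij_betw_imp_surj_on[OF bf] .
  define \<Phi> where "\<Phi> = (\<lambda>\<pi> x. if x \<in> S then f (\<pi> (inv_into {0..<s} f x)) else x)"
  have bP: "bij_betw \<Phi> {\<pi>. \<pi> permutes {0..<s}} {\<pi>. \<pi> permutes S}"
    unfolding \<Phi>_def by (rule bij_betw_permutations[OF bf])
  have Phi_map: "\<Phi> q = map_permutation {0..<s} f q" for q
    unfolding \<Phi>_def map_permutation_def restrict_id_def fA o_def by (rule refl)
  have "det (pmask Y S) = (\<Sum>p\<in>{p. p permutes S}. signof p * (\<Prod>i\<in>S. Y $$ (i, p i)))"
    by (rule det_pmask_perm[OF Y S])
  also have "\<dots> = (\<Sum>q\<in>{q. q permutes {0..<s}}. signof (\<Phi> q) * (\<Prod>i\<in>S. Y $$ (i, \<Phi> q i)))"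
    by (rule sum.reindex_bij_betw[OF bP, symmetric])
  also have "\<dots> = (\<Sum>q\<in>{q. q permutes {0..<s}}. signof q * (\<Prod>a=0..<s. submatrix Y S S $$ (a, q a)))"
  proof (rule sum.cong[OF refl])
    fix q assume "q \<in> {q. q permutes {0..<s}}"
    hence q: "q permutes {0..<s}" by auto
    have sg: "sign (\<Phi> q) = sign q" unfolding Phi_map by (rule sign_map_permutation[OF inj q]) auto
    have "(\<Prod>i\<in>S. Y $$ (i, \<Phi> q i)) = (\<Prod>a\<in>{0..<s}. Y $$ (f a, \<Phi> q (f a)))"
      by (rule prod.reindex_bij_betw[OF bf, symmetric])
    also have "\<dots> = (\<Prod>a=0..<s. submatrix Y S S $$ (a, q a))"
    proof (rule prod.cong[OF refl])
      fix a assume a: "a \<in> {0..<s}"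
      have qa: "q a \<in> {0..<s}" using permutes_in_image[OF q] a by auto
      have "\<Phi> q (f a) = f (q a)" unfolding Phi_map by (rule map_permutation_apply[OF inj a])
      thus "Y $$ (f a, \<Phi> q (f a)) = submatrix Y S S $$ (a, q a)"
        using ent[of a "q a"] a qa unfolding f_def by auto
    qed
    finally show "signof (\<Phi> q) * (\<Prod>i\<in>S. Y $$ (i, \<Phi> q i)) = signof q * (\<Prod>a=0..<s. submatrix Y S S $$ (a, q a))"
      using sg by simp
  qed
  also have "\<dots> = det (submatrix Y S S)" by (rule det_def'[OF SM, symmetric])
  finally show ?thesis by (rule sym)
qed

lemma replace_row_carrier[simp]: "T \<in> carrier_mat m n \<Longrightarrow> replace_row T j y \<in> carrier_mat m n"
  unfolding replace_row_def by auto

lemma replace_row_dims[simp]: "dim_row (replace_row T j y) = dim_row T" "dim_col (replace_row T j y) = dim_col T"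
  unfolding replace_row_def by auto

lemma replace_row_index'[simp]: "a < dim_row T \<Longrightarrow> b < dim_col T \<Longrightarrow>
  replace_row T j y $$ (a,b) = (if a = j then y $ b else T $$ (a,b))"
  unfolding replace_row_def by auto

lemma replace_row_index: "T \<in> carrier_mat m n \<Longrightarrow> a < m \<Longrightarrow> b < n \<Longrightarrow>
  replace_row T j y $$ (a,b) = (if a = j then y $ b else T $$ (a,b))"
  unfolding replace_row_def by auto

lemma det_replace_row_adj:
  fixes T :: "'a::comm_ring_1 mat"
  assumes T: "T \<in> carrier_mat m m" and j: "j < m"
  shows "det (replace_row T j y) = (\<Sum>l<m. y $ l * adj_mat T $$ (l,j))"
proof -
  have R: "replace_row T j y \<in> carrier_mat m m" using T by simp
  have "det (replace_row T j y) = (\<Sum>l<m. replace_row T j y $$ (j,l) * cofactor (replace_row T j y) j l)"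
    by (rule laplace_expansion_row[OF R j])
  also have "\<dots> = (\<Sum>l<m. y $ l * adj_mat T $$ (l,j))"
  proof (rule sum.cong[OF refl])
    fix l assume l: "l \<in> {..<m}"
    have md: "mat_delete (replace_row T j y) j l = mat_delete T j l"
      unfolding mat_delete_def using T j l by (intro eq_matI) auto
    have "adj_mat T $$ (l,j) = cofactor T j l" unfolding adj_mat_def using T j l by auto
    thus "replace_row T j y $$ (j,l) * cofactor (replace_row T j y) j l = y $ l * adj_mat T $$ (l,j)"
      using md T j l by (simp add: replace_row_index cofactor_def)
  qed
  finally show ?thesis .
qed

lemma mult_adj_entry:
  fixes T :: "'a::comm_ring_1 mat"
  assumes T: "T \<in> carrier_mat m m" and X: "X \<in> carrier_mat n m" and i: "i < n" and j: "j < m"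
  shows "(X * adj_mat T) $$ (i,j) = det (replace_row T j (row X i))"
proof -
  have aT: "adj_mat T \<in> carrier_mat m m" using adj_mat(1)[OF T] .
  have "(X * adj_mat T) $$ (i,j) = row X i \<bullet> col (adj_mat T) j" using X aT i j by simp
  also have "\<dots> = (\<Sum>l<m. row X i $ l * adj_mat T $$ (l,j))"
    unfolding scalar_prod_def using X aT j by (auto intro!: sum.cong simp: lessThan_atLeast0)
  also have "\<dots> = det (replace_row T j (row X i))" using det_replace_row_adj[OF T j] by simp
  finally show ?thesis .
qed

definition charp :: "'a::comm_ring_1 mat \<Rightarrow> 'a poly" where
  "charp Y = (\<Sum>S\<in>Pow {0..<dim_row Y}. monom (det (pmask Y S)) (dim_row Y - card S))"

definition nump :: "'a::comm_ring_1 mat \<Rightarrow> nat \<Rightarrow> 'a poly" where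
  "nump Y j = (\<Sum>S\<in>{S\<in>Pow {0..<dim_row Y}. j \<in> S}. monom (det (pmask Y S)) (dim_row Y - card S))"

lemma poly_charp:
  fixes C :: "'a::comm_ring_1 mat"
  assumes C: "C \<in> carrier_mat m m"
  shows "poly (charp C) t = det (t \<cdot>\<^sub>m 1\<^sub>m m + C)"
proof -
  have e: "t \<cdot>\<^sub>m 1\<^sub>m m + C = mat m m (\<lambda>(i,j). (if i = j then (\<lambda>_. t) i else 0) + C $$ (i,j))"
    using C by (auto intro!: eq_matI)
  have "det (t \<cdot>\<^sub>m 1\<^sub>m m + C) = (\<Sum>S\<in>Pow {0..<m}. (\<Prod>i\<in>{0..<m}-S. t) * det (pmask C S))"
    unfolding e by (rule det_diag_plus[OF C])
  also have "\<dots> = (\<Sum>S\<in>Pow {0..<m}. det (pmask C S) * t ^ (m - card S))"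
  proof (rule sum.cong[OF refl])
    fix S assume "S \<in> Pow {0..<m}"
    hence "card ({0..<m} - S) = m - card S" by (subst card_Diff_subset) (auto intro: finite_subset)
    thus "(\<Prod>i\<in>{0..<m}-S. t) * det (pmask C S) = det (pmask C S) * t ^ (m - card S)" by simp
  qed
  also have "\<dots> = poly (charp C) t" unfolding charp_def poly_sum poly_monom using C by simp
  finally show ?thesis by simp
qed

lemma poly_nump:
  fixes C :: "'a::comm_ring_1 mat"
  assumes C: "C \<in> carrier_mat m m" and j: "j < m"
  shows "poly (nump (replace_row C j y) j) t = det (replace_row (t \<cdot>\<^sub>m 1\<^sub>m m + C) j y)"
proof -
  let ?Y = "replace_row C j y"
  have Y: "?Y \<in> carrier_mat m m" using C by simp
  define x where "x = (\<lambda>a. if a = j then 0 else t)"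
  have e: "replace_row (t \<cdot>\<^sub>m 1\<^sub>m m + C) j y = mat m m (\<lambda>(a,b). (if a = b then x a else 0) + ?Y $$ (a,b))"
    using C j by (auto intro!: eq_matI simp: replace_row_index x_def)
  have "det (replace_row (t \<cdot>\<^sub>m 1\<^sub>m m + C) j y) = (\<Sum>S\<in>Pow {0..<m}. (\<Prod>i\<in>{0..<m}-S. x i) * det (pmask ?Y S))"
    unfolding e by (rule det_diag_plus[OF Y])
  also have "\<dots> = (\<Sum>S\<in>Pow {0..<m}. (if j \<in> S then det (pmask ?Y S) * t ^ (m - card S) else 0))"
  proof (rule sum.cong[OF refl])
    fix S assume S: "S \<in> Pow {0..<m}"
    hence cS: "card ({0..<m} - S) = m - card S" by (subst card_Diff_subset) (auto intro: finite_subset)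
    show "(\<Prod>i\<in>{0..<m}-S. x i) * det (pmask ?Y S) = (if j \<in> S then det (pmask ?Y S) * t ^ (m - card S) else 0)"
    proof (cases "j \<in> S")
      case True
      have "(\<Prod>i\<in>{0..<m}-S. x i) = (\<Prod>i\<in>{0..<m}-S. t)" using True unfolding x_def by (intro prod.cong) auto
      thus ?thesis using True cS by simp
    next
      case False
      have "(\<Prod>i\<in>{0..<m}-S. x i) = 0" using False j unfolding x_def by (intro prod_zero) (auto intro!: bexI[of _ j])
      thus ?thesis using False by simp
    qed
  qed
  also have "\<dots> = (\<Sum>S\<in>{S\<in>Pow {0..<m}. j \<in> S}. det (pmask ?Y S) * t ^ (m - card S))"
    by (subst sum.inter_filter[symmetric]) auto
  also have "\<dots> = poly (nump ?Y j) t" unfolding nump_def poly_sum poly_monom using C by simp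
  finally show ?thesis by simp
qed

lemma key_entry:
  fixes C :: "'a::comm_ring_1 mat"
  assumes C: "C \<in> carrier_mat m m" and i: "i < m" and j: "j < m"
  shows "((C * C) * adj_mat (t \<cdot>\<^sub>m 1\<^sub>m m + C)) $$ (i,j) =
     C $$ (i,j) * det (t \<cdot>\<^sub>m 1\<^sub>m m + C) - t * (C * adj_mat (t \<cdot>\<^sub>m 1\<^sub>m m + C)) $$ (i,j)"
proof -
  define T where "T = t \<cdot>\<^sub>m 1\<^sub>m m + C"
  have T: "T \<in> carrier_mat m m" using C unfolding T_def by auto
  define Q where "Q = adj_mat T"
  have Q: "Q \<in> carrier_mat m m" unfolding Q_def using adj_mat(1)[OF T] .
  have TQ: "T * Q = det T \<cdot>\<^sub>m 1\<^sub>m m" unfolding Q_def using adj_mat(2)[OF T] .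
  have CQ: "(C * Q) $$ (l,j) = (if l = j then det T else 0) - t * Q $$ (l,j)" if l: "l < m" for l
  proof -
    have "(T * Q) $$ (l,j) = (t \<cdot>\<^sub>m 1\<^sub>m m * Q + C * Q) $$ (l,j)"
      unfolding T_def using C Q by (subst add_mult_distrib_mat) auto
    also have "\<dots> = t * Q $$ (l,j) + (C * Q) $$ (l,j)" using C Q l j by simp
    finally have "(C * Q) $$ (l,j) = (T * Q) $$ (l,j) - t * Q $$ (l,j)" by simp
    thus ?thesis unfolding TQ using l j by simp
  qed
  have "((C * C) * Q) $$ (i,j) = (C * (C * Q)) $$ (i,j)" using C Q by (subst assoc_mult_mat) auto
  also have "\<dots> = (\<Sum>l\<in>{0..<m}. C $$ (i,l) * (C * Q) $$ (l,j))"
    using C Q i j by (simp add: scalar_prod_def)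
  also have "\<dots> = (\<Sum>l\<in>{0..<m}. C $$ (i,l) * (if l = j then det T else 0)) - t * (\<Sum>l\<in>{0..<m}. C $$ (i,l) * Q $$ (l,j))"
    by (simp add: CQ algebra_simps sum_subtractf sum_distrib_left)
  also have "(\<Sum>l\<in>{0..<m}. C $$ (i,l) * (if l = j then det T else 0)) = C $$ (i,j) * det T"
    using j by (simp add: if_distrib[of "\<lambda>x. _ * x"] sum.delta cong: if_cong)
  also have "(\<Sum>l\<in>{0..<m}. C $$ (i,l) * Q $$ (l,j)) = (C * Q) $$ (i,j)"
    using C Q i j by (simp add: scalar_prod_def)
  finally show ?thesis unfolding T_def Q_def .
qed

lemma key_poly:
  fixes C :: "complex mat"
  assumes C: "C \<in> carrier_mat m m" and i: "i < m" and j: "j < m"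
  shows "nump (replace_row C j (row (C * C) i)) j =
     Polynomial.smult (C $$ (i,j)) (charp C) - pCons 0 (nump (replace_row C j (row C i)) j)"
proof -
  have CC: "C * C \<in> carrier_mat m m" using C by simp
  have "poly (nump (replace_row C j (row (C * C) i)) j) t =
     poly (Polynomial.smult (C $$ (i,j)) (charp C) - pCons 0 (nump (replace_row C j (row C i)) j)) t" for t
  proof -
    have T: "t \<cdot>\<^sub>m 1\<^sub>m m + C \<in> carrier_mat m m" using C by auto
    show ?thesis
      unfolding poly_nump[OF C j] poly_diff Polynomial.poly_smult poly_pCons poly_charp[OF C]
      unfolding mult_adj_entry[OF T CC i j, symmetric] mult_adj_entry[OF T C i j, symmetric]
      using key_entry[OF C i j] by simp
  qed
  thus ?thesis using poly_eq_poly_eq_iff by blast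
qed

lemma (in vec_space) rank_factorization:
  assumes C: "C \<in> carrier_mat n nc"
  shows "\<exists>F H K. F \<in> carrier_mat n (rank C) \<and> H \<in> carrier_mat (rank C) nc \<and> K \<in> carrier_mat nc (rank C) \<and>
     C = F * H \<and> F = C * K \<and> H * K = 1\<^sub>m (rank C) \<and>
     (\<forall>v\<in>carrier_vec (rank C). F *\<^sub>v v = 0\<^sub>v n \<longrightarrow> v = 0\<^sub>v (rank C))"
proof -
  obtain S where max: "maximal S (\<lambda>T. T \<subseteq> set (cols C) \<and> lin_indpt T)"
    using maximal_exists[of "(\<lambda>T. T \<subseteq> set (cols C) \<and> lin_indpt T)" "card (set (cols C))" "{}"]
    by (meson List.finite_set card_mono empty_iff empty_subsetI finite_lin_indpt2 rev_finite_subset)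
  have rS: "rank C = card S" using rank_card_indpt[OF C max] .
  have SC: "S \<subseteq> set (cols C)" and li: "lin_indpt S" using max unfolding maximal_def by auto
  have fin: "finite S" using SC finite_subset by blast
  obtain l where l: "set l = S" "distinct l" using finite_distinct_list[OF fin] by blast
  define r where "r = rank C"
  have len: "length l = r" using l rS r_def distinct_card by fastforce
  have Scar: "S \<subseteq> carrier_vec n" using SC cols_dim C by blast
  have lcar: "set l \<subseteq> carrier_vec n" using Scar l by auto
  have colsC: "set (cols C) = {col C j | j. j < nc}" using C by (auto simp: cols_def)
  define idx where "idx = (\<lambda>v. SOME j. j < nc \<and> col C j = v)"
  have idx: "idx v < nc \<and> col C (idx v) = v" if "v \<in> S" for v
  proof -
    have "\<exists>j. j < nc \<and> col C j = v" using that SC colsC by auto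
    thus ?thesis unfolding idx_def by (rule someI_ex)
  qed
  define F where "F = mat_of_cols n l"
  define K where "K = (mat nc r (\<lambda>(j,a). if j = idx (l!a) then 1 else 0) :: 'a mat)"
  have F: "F \<in> carrier_mat n r" unfolding F_def using len by auto
  have K: "K \<in> carrier_mat nc r" unfolding K_def by auto
  have lS: "a < r \<Longrightarrow> l ! a \<in> S" for a using l len by auto
  have FCK: "F = C * K"
  proof (rule eq_matI)
    fix i a assume i: "i < dim_row (C * K)" and a: "a < dim_col (C * K)"
    hence i: "i < n" and a: "a < r" using C K by auto
    have ia: "idx (l!a) < nc" "col C (idx (l!a)) = l!a" using idx[OF lS[OF a]] by auto
    have "(C * K) $$ (i,a) = (\<Sum>j = 0..<nc. C $$ (i,j) * K $$ (j,a))"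
      using C K i a by (simp add: scalar_prod_def)
    also have "\<dots> = (\<Sum>j = 0..<nc. if j = idx (l!a) then C $$ (i,j) else 0)"
      using a unfolding K_def by (intro sum.cong) auto
    also have "\<dots> = C $$ (i, idx (l!a))" using ia by simp
    also have "\<dots> = col C (idx (l!a)) $ i" using C i ia(1) by simp
    also have "\<dots> = F $$ (i,a)" unfolding F_def using ia i a len mat_of_cols_index[of i n a l] by simp
    finally show "F $$ (i,a) = (C * K) $$ (i,a)" by simp
  qed (insert C F K, auto)
  have Finj: "\<forall>v\<in>carrier_vec r. F *\<^sub>v v = 0\<^sub>v n \<longrightarrow> v = 0\<^sub>v r"
  proof (intro ballI impI, rule ccontr)
    fix v assume v: "v \<in> carrier_vec r" and Fv: "F *\<^sub>v v = 0\<^sub>v n" and nz: "v \<noteq> 0\<^sub>v r"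
    have cF: "cols F = l" unfolding F_def using cols_mat_of_cols[OF lcar] .
    have "lin_dep (set (cols F))" using lin_depI[OF F v nz Fv] cF l by auto
    thus False using li cF l by auto
  qed
  have inspan: "col C j \<in> span S" if j: "j < nc" for j
  proof (cases "col C j \<in> S")
    case True thus ?thesis using in_own_span[OF Scar] by auto
  next
    case False
    have cc: "col C j \<in> carrier_vec n" using C j by auto
    show ?thesis
    proof (rule ccontr)
      assume ns: "col C j \<notin> span S"
      have "lin_indpt (S \<union> {col C j})" using lin_dep_iff_in_span[OF Scar li _ False] cc ns by auto
      moreover have "S \<union> {col C j} \<subseteq> set (cols C)" using SC colsC j by auto
      ultimately have "S \<union> {col C j} = S" using max unfolding maximal_def by blast
      thus False using False by auto
    qed
  qed
  have exh: "\<exists>h. h \<in> carrier_vec r \<and> F *\<^sub>v h = col C j" if j: "j < nc" for j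
  proof -
    have "col C j \<in> span_list l" using inspan[OF j] span_list_as_span[OF lcar] l by auto
    then obtain c where c: "col C j = lincomb_list c l" unfolding span_list_def by auto
    have "lincomb_list c l = F *\<^sub>v vec (length l) c" unfolding F_def
      by (rule lincomb_list_as_mat_mult) (insert lcar, auto)
    thus ?thesis using c len by (intro exI[of _ "vec (length l) c"]) auto
  qed
  define h where "h = (\<lambda>j. SOME h. h \<in> carrier_vec r \<and> F *\<^sub>v h = col C j)"
  have h: "h j \<in> carrier_vec r \<and> F *\<^sub>v h j = col C j" if "j < nc" for j
    unfolding h_def by (rule someI_ex[OF exh[OF that]])
  define H where "H = mat r nc (\<lambda>(a,j). h j $ a)"
  have H: "H \<in> carrier_mat r nc" unfolding H_def by auto
  have colH: "col H j = h j" if "j < nc" for j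
    using h[OF that] that unfolding H_def by (auto intro!: eq_vecI)
  have CFH: "C = F * H"
  proof (rule eq_matI)
    fix i j assume i: "i < dim_row (F * H)" and j: "j < dim_col (F * H)"
    hence i: "i < n" and j: "j < nc" using F H by auto
    have "(F * H) $$ (i,j) = (F *\<^sub>v col H j) $ i" using F H i j by simp
    also have "\<dots> = col C j $ i" using colH[OF j] h[OF j] by simp
    finally show "C $$ (i,j) = (F * H) $$ (i,j)" using C i j by simp
  qed (insert C F H, auto)
  have hidx: "h (idx (l!a)) = unit_vec r a" if a: "a < r" for a
  proof -
    have ia: "idx (l!a) < nc" "col C (idx (l!a)) = l!a" using idx[OF lS[OF a]] by auto
    have hc: "h (idx (l!a)) \<in> carrier_vec r" "F *\<^sub>v h (idx (l!a)) = l!a" using h[OF ia(1)] ia by auto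
    have Fe: "F *\<^sub>v unit_vec r a = l ! a"
    proof (rule eq_vecI)
      have la: "l ! a \<in> carrier_vec n" using lcar a len by auto
      show "dim_vec (F *\<^sub>v unit_vec r a) = dim_vec (l ! a)" using F la by simp
      fix i assume "i < dim_vec (l ! a)"
      hence i: "i < n" using la by simp
      have "(F *\<^sub>v unit_vec r a) $ i = row F i \<bullet> unit_vec r a" using F i by simp
      also have "\<dots> = row F i $ a" using F a by (intro scalar_prod_right_unit) auto
      also have "\<dots> = l ! a $ i" unfolding F_def using i a len mat_of_cols_index[of i n a l] by simp
      finally show "(F *\<^sub>v unit_vec r a) $ i = l ! a $ i" .
    qed
    have hm: "h (idx (l!a)) - unit_vec r a \<in> carrier_vec r" using hc by auto
    have "F *\<^sub>v (h (idx (l!a)) - unit_vec r a) = F *\<^sub>v h (idx (l!a)) - F *\<^sub>v unit_vec r a"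
      using F hc by (intro mult_minus_distrib_mat_vec) auto
    also have "\<dots> = 0\<^sub>v n"
    proof (rule eq_vecI)
      have la: "l ! a \<in> carrier_vec n" using lcar a len by auto
      show "dim_vec (F *\<^sub>v h (idx (l!a)) - F *\<^sub>v unit_vec r a) = dim_vec (0\<^sub>v n)" using F by simp
      fix i assume "i < dim_vec (0\<^sub>v n)"
      hence i: "i < n" by simp
      show "(F *\<^sub>v h (idx (l!a)) - F *\<^sub>v unit_vec r a) $ i = 0\<^sub>v n $ i"
        using i F la unfolding hc(2) Fe by simp
    qed
    finally have z: "h (idx (l!a)) - unit_vec r a = 0\<^sub>v r" using Finj hm by blast
    show ?thesis
    proof (rule eq_vecI)
      show "dim_vec (h (idx (l!a))) = dim_vec (unit_vec r a)" using hc by simp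
      fix i assume "i < dim_vec (unit_vec r a)"
      hence i: "i < r" by simp
      have "(h (idx (l!a)) - unit_vec r a) $ i = 0" using z i by simp
      thus "h (idx (l!a)) $ i = unit_vec r a $ i" using i hc by simp
    qed
  qed
  have HK: "H * K = 1\<^sub>m r"
  proof (rule eq_matI)
    fix b a assume b: "b < dim_row (1\<^sub>m r)" and a: "a < dim_col (1\<^sub>m r)"
    hence b: "b < r" and a: "a < r" by auto
    have ia: "idx (l!a) < nc" using idx[OF lS[OF a]] by auto
    have "(H * K) $$ (b,a) = (\<Sum>j = 0..<nc. H $$ (b,j) * K $$ (j,a))"
      using H K b a by (simp add: scalar_prod_def)
    also have "\<dots> = (\<Sum>j = 0..<nc. if j = idx (l!a) then H $$ (b,j) else 0)"
      using a unfolding K_def by (intro sum.cong) auto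
    also have "\<dots> = H $$ (b, idx (l!a))" using ia by simp
    also have "\<dots> = h (idx (l!a)) $ b" unfolding H_def using ia b by simp
    also have "\<dots> = 1\<^sub>m r $$ (b,a)" using hidx[OF a] a b by simp
    finally show "(H * K) $$ (b,a) = 1\<^sub>m r $$ (b,a)" .
  qed (insert H K, auto)
  show ?thesis unfolding r_def[symmetric]
    by (intro exI[of _ F] exI[of _ H] exI[of _ K] conjI F H K CFH FCK HK Finj)
qed

lemma wide_kernel:
  fixes H :: "'a::idom mat"
  assumes H: "H \<in> carrier_mat r m" and S: "S \<subseteq> {0..<m}" and cS: "card S > r"
  shows "\<exists>v\<in>carrier_vec m. v \<noteq> 0\<^sub>v m \<and> H *\<^sub>v v = 0\<^sub>v r \<and> (\<forall>l<m. l \<notin> S \<longrightarrow> v $ l = 0)"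
proof -
  define s where "s = card S"
  have fin: "finite S" using S finite_subset by blast
  have bp: "bij_betw (pick S) {0..<s} S" unfolding s_def by (rule pick_bij[OF fin])
  define Hs where "Hs = mat s s (\<lambda>(a,b). if a < r then H $$ (a, pick S b) else 0)"
  have Hs: "Hs \<in> carrier_mat s s" unfolding Hs_def by auto
  have rs: "r < s" using cS s_def by simp
  have "det Hs = (\<Sum>j<s. Hs $$ (r,j) * cofactor Hs r j)" by (rule laplace_expansion_row[OF Hs rs])
  also have "\<dots> = 0" unfolding Hs_def using rs by (intro sum.neutral) auto
  finally have "det Hs = 0" .
  then obtain w where w: "w \<in> carrier_vec s" "w \<noteq> 0\<^sub>v s" "Hs *\<^sub>v w = 0\<^sub>v s"
    using iffD1[OF det_0_iff_vec_prod_zero[OF Hs]] by metis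
  define idx where "idx = (\<lambda>l. card {x\<in>S. x < l})"
  have idx_pick: "idx (pick S b) = b" if "b < s" for b
    unfolding idx_def using card_pick_le[of b S] that s_def by auto
  define v where "v = vec m (\<lambda>l. if l \<in> S then w $ idx l else 0)"
  have v: "v \<in> carrier_vec m" unfolding v_def by auto
  have supp: "\<forall>l<m. l \<notin> S \<longrightarrow> v $ l = 0" unfolding v_def by auto
  have nz: "v \<noteq> 0\<^sub>v m"
  proof
    assume v0: "v = 0\<^sub>v m"
    have "\<exists>b<s. w $ b \<noteq> 0"
    proof (rule ccontr)
      assume "\<not> (\<exists>b<s. w $ b \<noteq> 0)"
      hence "w = 0\<^sub>v s" using w(1) by (intro eq_vecI) auto
      thus False using w(2) by simp
    qed
    then obtain b where b: "b < s" "w $ b \<noteq> 0" by blast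
    have pb: "pick S b \<in> S" using pick_in_set_le[of b S] b(1) s_def by simp
    hence pm: "pick S b < m" using S by auto
    have "v $ pick S b = w $ b" unfolding v_def using pb pm idx_pick[OF b(1)] by simp
    thus False using v0 b(2) pm by simp
  qed
  have Hv: "H *\<^sub>v v = 0\<^sub>v r"
  proof (rule eq_vecI)
    show "dim_vec (H *\<^sub>v v) = dim_vec (0\<^sub>v r)" using H by simp
    fix a assume "a < dim_vec (0\<^sub>v r)"
    hence a: "a < r" by simp
    have "(H *\<^sub>v v) $ a = (\<Sum>l\<in>{0..<m}. H $$ (a,l) * v $ l)"
      using H v a by (simp add: scalar_prod_def)
    also have "\<dots> = (\<Sum>l\<in>S. H $$ (a,l) * v $ l)"
      using S supp by (intro sum.mono_neutral_right) auto
    also have "\<dots> = (\<Sum>b\<in>{0..<s}. H $$ (a, pick S b) * v $ pick S b)"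
      by (rule sum.reindex_bij_betw[OF bp, symmetric])
    also have "\<dots> = (\<Sum>b\<in>{0..<s}. Hs $$ (a,b) * w $ b)"
    proof (rule sum.cong[OF refl])
      fix b assume b: "b \<in> {0..<s}"
      have pb: "pick S b \<in> S" using pick_in_set_le[of b S] b s_def by simp
      hence pm: "pick S b < m" using S by auto
      show "H $$ (a, pick S b) * v $ pick S b = Hs $$ (a,b) * w $ b"
        unfolding v_def Hs_def using a b pb pm idx_pick[of b] rs by simp
    qed
    also have "\<dots> = (Hs *\<^sub>v w) $ a" using Hs w(1) a rs by (simp add: scalar_prod_def)
    also have "\<dots> = 0" unfolding w(3) using a rs by simp
    finally show "(H *\<^sub>v v) $ a = 0\<^sub>v r $ a" using a by simp
  qed
  show ?thesis by (intro bexI[of _ v] conjI v nz Hv supp)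
qed

lemma det_pmask_kernel:
  fixes Y :: "'a::idom mat"
  assumes Y: "Y \<in> carrier_mat m m" and v: "v \<in> carrier_vec m" "v \<noteq> 0\<^sub>v m" "Y *\<^sub>v v = 0\<^sub>v m"
    and supp: "\<forall>l<m. l \<notin> S \<longrightarrow> v $ l = 0"
  shows "det (pmask Y S) = 0"
proof -
  have M: "pmask Y S \<in> carrier_mat m m" using Y unfolding pmask_def by auto
  have "pmask Y S *\<^sub>v v = 0\<^sub>v m"
  proof (rule eq_vecI)
    show "dim_vec (pmask Y S *\<^sub>v v) = dim_vec (0\<^sub>v m)" using M by simp
    fix a assume "a < dim_vec (0\<^sub>v m)"
    hence a: "a < m" by simp
    have "(pmask Y S *\<^sub>v v) $ a = (\<Sum>l\<in>{0..<m}. pmask Y S $$ (a,l) * v $ l)"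
      using M v a by (simp add: scalar_prod_def)
    also have "\<dots> = (\<Sum>l\<in>{0..<m}. if a \<in> S then Y $$ (a,l) * v $ l else (if a = l then v $ l else 0))"
      using a Y supp unfolding pmask_def by (intro sum.cong) auto
    also have "\<dots> = (if a \<in> S then (Y *\<^sub>v v) $ a else v $ a)"
      using a Y v(1) by (simp add: scalar_prod_def)
    also have "\<dots> = 0" unfolding v(3) using a supp by simp
    finally show "(pmask Y S *\<^sub>v v) $ a = 0\<^sub>v m $ a" using a by simp
  qed
  thus ?thesis unfolding det_0_iff_vec_prod_zero[OF M] using v by (intro exI[of _ v]) simp
qed

lemma if_one_mult: "(if P then 1 else 0) * (x::'a::semiring_1) = (if P then x else 0)" by simp

lemma sylvester_det:
  fixes F :: "'a::field mat"
  assumes F: "F \<in> carrier_mat m r" and H: "H \<in> carrier_mat r m" and t: "t \<noteq> 0" and rm: "r \<le> m"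
  shows "det (t \<cdot>\<^sub>m 1\<^sub>m m + F * H) = t ^ (m - r) * det (t \<cdot>\<^sub>m 1\<^sub>m r + H * F)"
proof -
  have FH: "F * H \<in> carrier_mat m m" and HF: "H * F \<in> carrier_mat r r" using F H by auto
  define N where "N = four_block_mat (t \<cdot>\<^sub>m 1\<^sub>m m) (- F) H (1\<^sub>m r)"
  define L1 where "L1 = four_block_mat (1\<^sub>m m) (- F) (0\<^sub>m r m) (1\<^sub>m r)"
  define M1 where "M1 = four_block_mat (t \<cdot>\<^sub>m 1\<^sub>m m + F * H) (0\<^sub>m m r) H (1\<^sub>m r)"
  define M2 where "M2 = four_block_mat (t \<cdot>\<^sub>m 1\<^sub>m m) (0\<^sub>m m r) H (1\<^sub>m r + (1/t) \<cdot>\<^sub>m (H * F))"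
  define U2 where "U2 = four_block_mat (1\<^sub>m m) (- ((1/t) \<cdot>\<^sub>m F)) (0\<^sub>m r m) (1\<^sub>m r)"
  have L1c: "L1 \<in> carrier_mat (m+r) (m+r)" unfolding L1_def using F by (intro four_block_carrier_mat) auto
  have M1c: "M1 \<in> carrier_mat (m+r) (m+r)" unfolding M1_def using F H by (intro four_block_carrier_mat) auto
  have M2c: "M2 \<in> carrier_mat (m+r) (m+r)" unfolding M2_def using F H by (intro four_block_carrier_mat) auto
  have U2c: "U2 \<in> carrier_mat (m+r) (m+r)" unfolding U2_def using F H by (intro four_block_carrier_mat) auto
  have b1: "1\<^sub>m m * (t \<cdot>\<^sub>m 1\<^sub>m m + F * H) + - F * H = t \<cdot>\<^sub>m 1\<^sub>m m"
    using F H by (intro eq_matI) auto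
  have mF: "- F \<in> carrier_mat m r" using F by simp
  have TFH: "t \<cdot>\<^sub>m 1\<^sub>m m + F * H \<in> carrier_mat m m" using FH by simp
  have T1: "t \<cdot>\<^sub>m 1\<^sub>m m \<in> carrier_mat m m" by simp
  have e1: "L1 * M1 = N" unfolding L1_def M1_def N_def
    by (subst mult_four_block_mat[OF one_carrier_mat mF zero_carrier_mat one_carrier_mat
        TFH zero_carrier_mat H one_carrier_mat], insert F H b1, auto)
  have b2: "t \<cdot>\<^sub>m 1\<^sub>m m * - ((1/t) \<cdot>\<^sub>m F) + 0\<^sub>m m r * 1\<^sub>m r = - F"
    using F t by (intro eq_matI) (auto simp: scalar_prod_def if_one_mult sum.delta)
  have b3: "H * - ((1/t) \<cdot>\<^sub>m F) + (1\<^sub>m r + (1/t) \<cdot>\<^sub>m (H * F)) * 1\<^sub>m r = 1\<^sub>m r"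
    using F H t by (intro eq_matI) (auto simp: scalar_prod_def sum_distrib_left algebra_simps)
  have mtF: "- ((1/t) \<cdot>\<^sub>m F) \<in> carrier_mat m r" using F by simp
  have X: "1\<^sub>m r + (1/t) \<cdot>\<^sub>m (H * F) \<in> carrier_mat r r" using HF by simp
  have e2: "M2 * U2 = N" unfolding M2_def U2_def N_def
    by (subst mult_four_block_mat[OF T1 zero_carrier_mat H X
        one_carrier_mat mtF zero_carrier_mat one_carrier_mat], insert F H b2 b3, auto)
  have dL1: "det L1 = 1" unfolding L1_def
    by (subst det_four_block_mat_lower_left_zero[of _ m _ r]) (insert F, auto)
  have dM1: "det M1 = det (t \<cdot>\<^sub>m 1\<^sub>m m + F * H)" unfolding M1_def
    by (subst det_four_block_mat_upper_right_zero[of _ m _ r]) (insert F H, auto)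
  have dU2: "det U2 = 1" unfolding U2_def
    by (subst det_four_block_mat_lower_left_zero[of _ m _ r]) (insert F, auto)
  have b4: "1\<^sub>m r + (1/t) \<cdot>\<^sub>m (H * F) = (1/t) \<cdot>\<^sub>m (t \<cdot>\<^sub>m 1\<^sub>m r + H * F)"
    using F H t by (intro eq_matI) (auto simp: algebra_simps)
  have dM2: "det M2 = t ^ m * ((1/t) ^ r * det (t \<cdot>\<^sub>m 1\<^sub>m r + H * F))" unfolding M2_def
    by (subst det_four_block_mat_upper_right_zero[of _ m _ r]) (insert F H, auto simp: b4)
  have "det (t \<cdot>\<^sub>m 1\<^sub>m m + F * H) = det N" using det_mult[OF L1c M1c] e1 dL1 dM1 by simp
  also have "\<dots> = t ^ m * ((1/t) ^ r * det (t \<cdot>\<^sub>m 1\<^sub>m r + H * F))" using det_mult[OF M2c U2c] e2 dM2 dU2 by simp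
  also have "t ^ m * (1/t) ^ r = t ^ (m - r)"
  proof -
    have "t ^ m = t ^ (m - r) * t ^ r" using rm by (simp add: power_add[symmetric])
    thus ?thesis using t by (simp add: power_one_over field_simps)
  qed
  hence "t ^ m * ((1/t) ^ r * det (t \<cdot>\<^sub>m 1\<^sub>m r + H * F)) = t ^ (m - r) * det (t \<cdot>\<^sub>m 1\<^sub>m r + H * F)"
    by (metis mult.assoc)
  finally show ?thesis .
qed

lemma coeff_charp:
  fixes C :: "'a::comm_ring_1 mat"
  assumes C: "C \<in> carrier_mat m m" and r: "r \<le> m"
  shows "coeff (charp C) (m - r) = (\<Sum>S\<in>{S\<in>Pow {0..<m}. card S = r}. det (pmask C S))"
proof -
  have dC: "dim_row C = m" using C by simp
  have "coeff (charp C) (m - r) = (\<Sum>S\<in>Pow {0..<m}. if card S = r then det (pmask C S) else 0)"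
    unfolding charp_def coeff_sum coeff_monom dC
  proof (rule sum.cong[OF refl])
    fix S assume "S \<in> Pow {0..<m}"
    hence "card S \<le> m" by (metis PowD card_atLeastLessThan card_mono finite_atLeastLessThan minus_nat.diff_0)
    thus "(if m - card S = m - r then det (pmask C S) else 0) = (if card S = r then det (pmask C S) else 0)"
      using r by auto
  qed
  also have "\<dots> = (\<Sum>S\<in>{S\<in>Pow {0..<m}. card S = r}. det (pmask C S))"
    by (subst sum.inter_filter[symmetric]) auto
  finally show ?thesis .
qed

lemma coeff_nump:
  fixes Y :: "'a::comm_ring_1 mat"
  assumes Y: "Y \<in> carrier_mat m m" and r: "r \<le> m"
  shows "coeff (nump Y j) (m - r) = (\<Sum>S\<in>{S\<in>Pow {0..<m}. j \<in> S \<and> card S = r}. det (pmask Y S))"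
proof -
  have dY: "dim_row Y = m" using Y by simp
  have "coeff (nump Y j) (m - r) = (\<Sum>S\<in>{S\<in>Pow {0..<m}. j \<in> S}. if card S = r then det (pmask Y S) else 0)"
    unfolding nump_def coeff_sum coeff_monom dY
  proof (rule sum.cong[OF refl])
    fix S assume "S \<in> {S\<in>Pow {0..<m}. j \<in> S}"
    hence "card S \<le> m" by (metis (no_types, lifting) PowD card_atLeastLessThan card_mono finite_atLeastLessThan mem_Collect_eq minus_nat.diff_0)
    thus "(if m - card S = m - r then det (pmask Y S) else 0) = (if card S = r then det (pmask Y S) else 0)"
      using r by auto
  qed
  also have "\<dots> = (\<Sum>S\<in>{S\<in>Pow {0..<m}. j \<in> S \<and> card S = r}. det (pmask Y S))"
    by (subst sum.inter_filter[symmetric]) (auto intro!: sum.cong)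
  finally show ?thesis .
qed

lemma denom_link:
  fixes C :: "'a::comm_ring_1 mat"
  assumes C: "C \<in> carrier_mat m m" and r: "r \<le> m"
  shows "(\<Sum>\<alpha>\<in>Irm r m. det (principal_submatrix C \<alpha>)) = coeff (charp C) (m - r)"
proof -
  have "Irm r m = {S\<in>Pow {0..<m}. card S = r}" unfolding Irm_def by auto
  thus ?thesis unfolding coeff_charp[OF C r] principal_submatrix_def
    by (auto intro!: sum.cong det_submatrix_pmask[OF C])
qed

lemma numer_link:
  fixes Y :: "'a::comm_ring_1 mat"
  assumes Y: "Y \<in> carrier_mat m m" and r: "r \<le> m"
  shows "(\<Sum>\<alpha>\<in>{\<alpha>\<in>Irm r m. j \<in> \<alpha>}. det (principal_submatrix Y \<alpha>)) = coeff (nump Y j) (m - r)"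
proof -
  have "{\<alpha>\<in>Irm r m. j \<in> \<alpha>} = {S\<in>Pow {0..<m}. j \<in> S \<and> card S = r}" unfolding Irm_def by auto
  thus ?thesis unfolding coeff_nump[OF Y r] principal_submatrix_def
    by (auto intro!: sum.cong det_submatrix_pmask[OF Y])
qed

lemma poly_eq_nonzero:
  fixes p q :: "complex poly"
  assumes "\<And>t. t \<noteq> 0 \<Longrightarrow> poly p t = poly q t"
  shows "p = q"
proof (rule ccontr)
  assume "p \<noteq> q"
  hence nz: "p - q \<noteq> 0" by simp
  have "finite {t. poly (p - q) t = 0}" using poly_roots_finite[OF nz] .
  moreover have "UNIV - {0} \<subseteq> {t. poly (p - q) t = 0}" using assms by auto
  ultimately have "finite (UNIV - {0::complex})" using finite_subset by blast
  thus False using infinite_UNIV_char_0[where 'a=complex] by simp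
qed

lemma pmask_full:
  assumes Y: "Y \<in> carrier_mat r r"
  shows "pmask Y {0..<r} = Y"
  using Y unfolding pmask_def by (intro eq_matI) auto

lemma charp_factor:
  fixes F :: "complex mat"
  assumes F: "F \<in> carrier_mat m r" and H: "H \<in> carrier_mat r m" and rm: "r \<le> m"
  shows "coeff (charp (F * H)) (m - r) = det (H * F)"
proof -
  have FH: "F * H \<in> carrier_mat m m" and HF: "H * F \<in> carrier_mat r r" using F H by auto
  have "charp (F * H) = monom 1 (m - r) * charp (H * F)"
  proof (rule poly_eq_nonzero)
    fix t :: complex assume t: "t \<noteq> 0"
    show "poly (charp (F * H)) t = poly (monom 1 (m - r) * charp (H * F)) t"
      unfolding poly_mult poly_monom poly_charp[OF FH] poly_charp[OF HF]
      using sylvester_det[OF F H t rm] by simp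
  qed
  hence "coeff (charp (F * H)) (m - r) = coeff (monom 1 (m - r) * charp (H * F)) ((m - r) + 0)" by simp
  also have "\<dots> = coeff (charp (H * F)) (r - r)" by (simp only: coeff_monom_mult) simp
  also have "\<dots> = (\<Sum>S\<in>{S\<in>Pow {0..<r}. card S = r}. det (pmask (H * F) S))"
    by (rule coeff_charp[OF HF order_refl])
  also have "{S\<in>Pow {0..<r}. card S = r} = {{0..<r}}"
  proof
    show "{S\<in>Pow {0..<r}. card S = r} \<subseteq> {{0..<r}}"
    proof
      fix S assume "S \<in> {S\<in>Pow {0..<r}. card S = r}"
      hence "S \<subseteq> {0..<r}" "card S = card {0..<r}" by auto
      hence "S = {0..<r}" using card_subset_eq[of "{0..<r}" S] by simp
      thus "S \<in> {{0..<r}}" by simp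
    qed
  qed auto
  also have "(\<Sum>S\<in>{{0..<r}}. det (pmask (H * F) S)) = det (H * F)" using pmask_full[OF HF] by simp
  finally show ?thesis .
qed

lemma key_coeff:
  fixes F H :: "complex mat"
  assumes F: "F \<in> carrier_mat m r" and H: "H \<in> carrier_mat r m" and rm: "r \<le> m"
    and i: "i < m" and j: "j < m"
  shows "coeff (nump (replace_row (F * H) j (row ((F * H) * (F * H)) i)) j) (m - r)
      = (F * H) $$ (i,j) * coeff (charp (F * H)) (m - r)"
proof -
  define C where "C = F * H"
  have C: "C \<in> carrier_mat m m" unfolding C_def using F H by auto
  define q where "q = nump (replace_row C j (row C i)) j"
  have kp: "nump (replace_row C j (row (C * C) i)) j = Polynomial.smult (C $$ (i,j)) (charp C) - pCons 0 q"
    unfolding q_def by (rule key_poly[OF C i j])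
  have z: "coeff (pCons 0 q) (m - r) = 0"
  proof (cases "m - r")
    case 0 thus ?thesis by simp
  next
    case (Suc n)
    hence n: "n = m - Suc r" and sr: "Suc r \<le> m" by auto
    let ?Y = "replace_row C j (row C i)"
    have Y: "?Y \<in> carrier_mat m m" using C by simp
    have "coeff (pCons 0 q) (m - r) = coeff q n" using Suc by simp
    also have "\<dots> = (\<Sum>S\<in>{S\<in>Pow {0..<m}. j \<in> S \<and> card S = Suc r}. det (pmask ?Y S))"
      unfolding q_def n by (rule coeff_nump[OF Y sr])
    also have "\<dots> = 0"
    proof (rule sum.neutral, rule ballI)
      fix S assume "S \<in> {S\<in>Pow {0..<m}. j \<in> S \<and> card S = Suc r}"
      hence S: "S \<subseteq> {0..<m}" and cS: "card S > r" by auto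
      obtain v where v: "v \<in> carrier_vec m" "v \<noteq> 0\<^sub>v m" "H *\<^sub>v v = 0\<^sub>v r" and supp: "\<forall>l<m. l \<notin> S \<longrightarrow> v $ l = 0"
        using wide_kernel[OF H S cS] by blast
      have Cv: "C *\<^sub>v v = 0\<^sub>v m"
      proof -
        have "C *\<^sub>v v = F *\<^sub>v (H *\<^sub>v v)" unfolding C_def using F H v(1) by (rule assoc_mult_mat_vec)
        also have "\<dots> = 0\<^sub>v m" unfolding v(3) using F by (intro eq_vecI) (auto simp: scalar_prod_def)
        finally show ?thesis .
      qed
      have Yv: "?Y *\<^sub>v v = 0\<^sub>v m"
      proof (rule eq_vecI)
        show "dim_vec (?Y *\<^sub>v v) = dim_vec (0\<^sub>v m)" using C by simp
        fix a assume "a < dim_vec (0\<^sub>v m)"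
        hence a: "a < m" by simp
        have "(?Y *\<^sub>v v) $ a = (\<Sum>l\<in>{0..<m}. ?Y $$ (a,l) * v $ l)"
          using C v(1) a by (simp add: scalar_prod_def)
        also have "\<dots> = (\<Sum>l\<in>{0..<m}. C $$ (if a = j then i else a, l) * v $ l)"
          using C a i by (intro sum.cong) (auto simp: replace_row_index)
        also have "\<dots> = (C *\<^sub>v v) $ (if a = j then i else a)"
          using C v(1) a i by (simp add: scalar_prod_def)
        also have "\<dots> = 0" unfolding Cv using a i by simp
        finally show "(?Y *\<^sub>v v) $ a = 0\<^sub>v m $ a" using a by simp
      qed
      show "det (pmask ?Y S) = 0" by (rule det_pmask_kernel[OF Y v(1,2) Yv supp])
    qed
    finally show ?thesis .
  qed
  show ?thesis unfolding C_def[symmetric] kp using z by simp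
qed

lemma nump_lin:
  fixes C U M :: "complex mat"
  assumes C: "C \<in> carrier_mat m m" and U: "U \<in> carrier_mat n m" and M: "M \<in> carrier_mat m m"
    and i: "i < n" and j: "j < m"
  shows "nump (replace_row C j (row (U * M) i)) j = (\<Sum>l<m. Polynomial.smult (U $$ (i,l)) (nump (replace_row C j (row M l)) j))"
proof -
  have "poly (nump (replace_row C j (row (U * M) i)) j) t = poly (\<Sum>l<m. Polynomial.smult (U $$ (i,l)) (nump (replace_row C j (row M l)) j)) t" for t
  proof -
    define T where "T = t \<cdot>\<^sub>m 1\<^sub>m m + C"
    have T: "T \<in> carrier_mat m m" unfolding T_def using C by auto
    have aT: "adj_mat T \<in> carrier_mat m m" using adj_mat(1)[OF T] .
    have UM: "U * M \<in> carrier_mat n m" using U M by auto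
    have "poly (nump (replace_row C j (row (U * M) i)) j) t = det (replace_row T j (row (U * M) i))"
      unfolding T_def by (rule poly_nump[OF C j])
    also have "\<dots> = ((U * M) * adj_mat T) $$ (i,j)" by (rule mult_adj_entry[OF T UM i j, symmetric])
    also have "\<dots> = (U * (M * adj_mat T)) $$ (i,j)" using U M aT by (subst assoc_mult_mat) auto
    also have "\<dots> = (\<Sum>l\<in>{0..<m}. U $$ (i,l) * (M * adj_mat T) $$ (l,j))"
      using U M aT i j by (simp add: scalar_prod_def)
    also have "\<dots> = (\<Sum>l<m. U $$ (i,l) * det (replace_row T j (row M l)))"
      using mult_adj_entry[OF T M _ j] by (auto simp: lessThan_atLeast0 intro!: sum.cong)
    also have "\<dots> = poly (\<Sum>l<m. Polynomial.smult (U $$ (i,l)) (nump (replace_row C j (row M l)) j)) t"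
      unfolding poly_sum Polynomial.poly_smult poly_nump[OF C j] T_def by simp
    finally show ?thesis .
  qed
  thus ?thesis using poly_eq_poly_eq_iff by blast
qed

lemma assoc_sq: "A \<in> carrier_mat m m \<Longrightarrow> B \<in> carrier_mat m m \<Longrightarrow> C \<in> carrier_mat m m \<Longrightarrow> A * B * C = A * (B * C)"
  by (rule assoc_mult_mat)

lemma mult_sq: "A \<in> carrier_mat m m \<Longrightarrow> B \<in> carrier_mat m m \<Longrightarrow> A * B \<in> carrier_mat m m"
  by (rule mult_carrier_mat)

lemma pow_mat_Suc_left:
  assumes A: "A \<in> carrier_mat n n"
  shows "A ^\<^sub>m Suc k = A * A ^\<^sub>m k"
proof (induction k)
  case 0 thus ?case using A by simp
next
  case (Suc k)
  have "A ^\<^sub>m Suc (Suc k) = A ^\<^sub>m Suc k * A" by simp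
  also have "\<dots> = A * A ^\<^sub>m k * A" using Suc by simp
  also have "\<dots> = A * (A ^\<^sub>m k * A)" using A by (intro assoc_sq) auto
  finally show ?case by simp
qed

lemma pow_mat_add:
  assumes A: "A \<in> carrier_mat n n"
  shows "A ^\<^sub>m (a + b) = A ^\<^sub>m a * A ^\<^sub>m b"
proof (induction b)
  case 0 thus ?case using A by simp
next
  case (Suc b)
  have "A ^\<^sub>m (a + Suc b) = A ^\<^sub>m (a + b) * A" by simp
  also have "\<dots> = A ^\<^sub>m a * A ^\<^sub>m b * A" using Suc by simp
  also have "\<dots> = A ^\<^sub>m a * (A ^\<^sub>m b * A)" using A by (intro assoc_sq) auto
  finally show ?case by simp
qed

lemma pow_comm:
  assumes A: "A \<in> carrier_mat n n" and B: "B \<in> carrier_mat n n" and AB: "A * B = B * A"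
  shows "A ^\<^sub>m k * B = B * A ^\<^sub>m k"
proof (induction k)
  case 0 thus ?case using A B by simp
next
  case (Suc k)
  have "A ^\<^sub>m Suc k * B = A ^\<^sub>m k * (A * B)" using A B by (simp add: assoc_sq[where m=n] mult_sq[where m=n])
  also have "\<dots> = (A ^\<^sub>m k * B) * A" using A B AB by (simp add: assoc_sq[where m=n] mult_sq[where m=n])
  also have "\<dots> = B * A ^\<^sub>m Suc k" using Suc A B by (simp add: assoc_sq[where m=n] mult_sq[where m=n])
  finally show ?case .
qed

lemma pow_mult_comm:
  assumes A: "A \<in> carrier_mat n n" and B: "B \<in> carrier_mat n n" and AB: "A * B = B * A"
  shows "(A * B) ^\<^sub>m k = A ^\<^sub>m k * B ^\<^sub>m k"
proof (induction k)
  case 0 thus ?case using A B by simp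
next
  case (Suc k)
  have c: "B ^\<^sub>m k * A = A * B ^\<^sub>m k" using pow_comm[OF B A AB[symmetric]] .
  have "(A * B) ^\<^sub>m Suc k = A ^\<^sub>m k * B ^\<^sub>m k * (A * B)" using Suc by simp
  also have "\<dots> = A ^\<^sub>m k * (B ^\<^sub>m k * A) * B" using A B by (simp add: assoc_sq[where m=n] mult_sq[where m=n])
  also have "\<dots> = A ^\<^sub>m k * (A * B ^\<^sub>m k) * B" unfolding c ..
  also have "\<dots> = A ^\<^sub>m Suc k * B ^\<^sub>m Suc k" using A B by (simp add: assoc_sq[where m=n] mult_sq[where m=n] pow_mat_Suc_left[of B])
  finally show ?case .
qed

lemma idem_pow:
  assumes E: "E \<in> carrier_mat n n" and EE: "E * E = E"
  shows "E ^\<^sub>m Suc k = E"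
proof (induction k)
  case 0 thus ?case using E by simp
next
  case (Suc k)
  thus ?case using EE by simp
qed

lemma drazin_unique:
  fixes A X Y :: "'a::comm_ring_1 mat"
  assumes A: "A \<in> carrier_mat n n" and X: "X \<in> carrier_mat n n" and Y: "Y \<in> carrier_mat n n"
    and X1: "A ^\<^sub>m (k+1) * X = A ^\<^sub>m k" and X2: "X * A * X = X" and X3: "A * X = X * A"
    and Y1: "A ^\<^sub>m (k+1) * Y = A ^\<^sub>m k" and Y2: "Y * A * Y = Y" and Y3: "A * Y = Y * A"
  shows "X = Y"
proof -
  have gen: "A * U = (A * V) * (A * U)"
    if U: "U \<in> carrier_mat n n" and V: "V \<in> carrier_mat n n"
      and U2: "U * A * U = U" and U3: "A * U = U * A"
      and V1: "A ^\<^sub>m (k+1) * V = A ^\<^sub>m k" and V3: "A * V = V * A" for U V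
  proof -
    have AU: "A * U \<in> carrier_mat n n" and AV: "A * V \<in> carrier_mat n n" using A U V by auto
    have idem: "(A * U) * (A * U) = A * U"
    proof -
      have "(A * U) * (A * U) = A * ((U * A) * U)" using A U by (simp add: assoc_sq[where m=n] mult_sq[where m=n])
      also have "\<dots> = A * U" using U2 by simp
      finally show ?thesis .
    qed
    have "A * U = (A * U) ^\<^sub>m (k+1)" using idem_pow[OF AU idem, of k] by simp
    also have "\<dots> = A ^\<^sub>m (k+1) * U ^\<^sub>m (k+1)" by (rule pow_mult_comm[OF A U U3])
    also have "A ^\<^sub>m (k+1) = A ^\<^sub>m (k+1) * (A * V)"
    proof -
      have "A ^\<^sub>m (k+1) * (A * V) = (A ^\<^sub>m (k+1) * A) * V" using A V by (simp add: assoc_sq[where m=n] mult_sq[where m=n])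
      also have "\<dots> = (A * A ^\<^sub>m (k+1)) * V" using pow_comm[OF A A refl, of "k+1"] by simp
      also have "\<dots> = A * A ^\<^sub>m k" using A V V1 by (simp add: assoc_sq[where m=n] mult_sq[where m=n])
      also have "\<dots> = A ^\<^sub>m (k+1)" using pow_mat_Suc_left[OF A, of k] by simp
      finally show ?thesis by simp
    qed
    also have "A ^\<^sub>m (k+1) * (A * V) = (A * V) * A ^\<^sub>m (k+1)"
    proof -
      have "A * (A * V) = A * (V * A)" by (simp only: V3)
      also have "\<dots> = (A * V) * A" using A V by (simp add: assoc_sq[where m=n] mult_sq[where m=n])
      finally have "A * (A * V) = (A * V) * A" .
      thus ?thesis by (rule pow_comm[OF A AV])
    qed
    also have "(A * V) * A ^\<^sub>m (k+1) * U ^\<^sub>m (k+1) = (A * V) * (A ^\<^sub>m (k+1) * U ^\<^sub>m (k+1))"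
      using A U V by (simp add: assoc_sq[where m=n] mult_sq[where m=n])
    also have "A ^\<^sub>m (k+1) * U ^\<^sub>m (k+1) = (A * U) ^\<^sub>m (k+1)" by (rule pow_mult_comm[OF A U U3, symmetric])
    also have "\<dots> = A * U" using idem_pow[OF AU idem, of k] by simp
    finally show ?thesis .
  qed
  have gen2: "A * U = (A * U) * (A * V)"
    if U: "U \<in> carrier_mat n n" and V: "V \<in> carrier_mat n n"
      and U2: "U * A * U = U" and U3: "A * U = U * A"
      and V1: "A ^\<^sub>m (k+1) * V = A ^\<^sub>m k" and V3: "A * V = V * A" for U V
  proof -
    have AU: "A * U \<in> carrier_mat n n" and AV: "A * V \<in> carrier_mat n n" using A U V by auto
    have idem: "(A * U) * (A * U) = A * U"
    proof -
      have "(A * U) * (A * U) = A * ((U * A) * U)" using A U by (simp add: assoc_sq[where m=n] mult_sq[where m=n])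
      also have "\<dots> = A * U" using U2 by simp
      finally show ?thesis .
    qed
    have AA: "A ^\<^sub>m (k+1) = A ^\<^sub>m (k+1) * (A * V)"
    proof -
      have "A ^\<^sub>m (k+1) * (A * V) = (A ^\<^sub>m (k+1) * A) * V" using A V by (simp add: assoc_sq[where m=n] mult_sq[where m=n])
      also have "\<dots> = (A * A ^\<^sub>m (k+1)) * V" using pow_comm[OF A A refl, of "k+1"] by simp
      also have "\<dots> = A * A ^\<^sub>m k" using A V V1 by (simp add: assoc_sq[where m=n] mult_sq[where m=n])
      also have "\<dots> = A ^\<^sub>m (k+1)" using pow_mat_Suc_left[OF A, of k] by simp
      finally show ?thesis by simp
    qed
    have "A * U = (A * U) ^\<^sub>m (k+1)" using idem_pow[OF AU idem, of k] by simp
    also have "\<dots> = (U * A) ^\<^sub>m (k+1)" unfolding U3 ..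
    also have "\<dots> = U ^\<^sub>m (k+1) * A ^\<^sub>m (k+1)" by (rule pow_mult_comm[OF U A U3[symmetric]])
    also have "\<dots> = U ^\<^sub>m (k+1) * (A ^\<^sub>m (k+1) * (A * V))" using AA by simp
    also have "\<dots> = (U ^\<^sub>m (k+1) * A ^\<^sub>m (k+1)) * (A * V)" using A U V by (simp add: assoc_sq[where m=n] mult_sq[where m=n])
    also have "U ^\<^sub>m (k+1) * A ^\<^sub>m (k+1) = (U * A) ^\<^sub>m (k+1)" by (rule pow_mult_comm[OF U A U3[symmetric], symmetric])
    also have "\<dots> = A * U" using idem_pow[OF AU idem, of k] U3 by simp
    finally show ?thesis .
  qed
  have e1: "A * X = (A * X) * (A * Y)" by (rule gen2[OF X Y X2 X3 Y1 Y3])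
  have e2: "A * Y = (A * X) * (A * Y)" by (rule gen[OF Y X Y2 Y3 X1 X3])
  have AXY: "A * X = A * Y" using e1 e2 by simp
  have "X = X * A * X" using X2 by simp
  also have "\<dots> = X * (A * Y)" using A X by (simp add: assoc_sq[where m=n] mult_sq[where m=n] AXY[symmetric])
  also have "\<dots> = (A * X) * Y" using A X Y X3 by (simp add: assoc_sq[where m=n] mult_sq[where m=n])
  also have "\<dots> = Y * A * Y" using A X Y Y3 AXY by (simp add: assoc_sq[where m=n] mult_sq[where m=n])
  also have "\<dots> = Y" using Y2 .
  finally show ?thesis .
qed

lemma assoc_dim: "dim_col A = dim_row B \<Longrightarrow> dim_col B = dim_row C \<Longrightarrow> A * B * C = A * (B * C)"
  by (rule assoc_mult_mat[of A "dim_row A" "dim_col A" B "dim_col B" C "dim_col C"]) auto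

lemma inj_cancel:
  fixes F :: "'a::comm_ring_1 mat"
  assumes F: "F \<in> carrier_mat m r" and inj: "\<forall>v\<in>carrier_vec r. F *\<^sub>v v = 0\<^sub>v m \<longrightarrow> v = 0\<^sub>v r"
    and X: "X \<in> carrier_mat r c" and X': "X' \<in> carrier_mat r c" and e: "F * X = F * X'"
  shows "X = X'"
proof (rule eq_matI)
  fix a b assume a: "a < dim_row X'" and b: "b < dim_col X'"
  hence a: "a < r" and b: "b < c" using X' by auto
  have cX: "col X b \<in> carrier_vec r" "col X' b \<in> carrier_vec r" using X X' b by auto
  have "F *\<^sub>v (col X b - col X' b) = F *\<^sub>v col X b - F *\<^sub>v col X' b"
    using F cX by (intro mult_minus_distrib_mat_vec) auto
  also have "F *\<^sub>v col X b = col (F * X) b" by (rule col_mult2[OF F X b, symmetric])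
  also have "F *\<^sub>v col X' b = col (F * X') b" by (rule col_mult2[OF F X' b, symmetric])
  also have "col (F * X) b - col (F * X') b = 0\<^sub>v m" unfolding e using F X' b by (intro eq_vecI) auto
  finally have "col X b - col X' b = 0\<^sub>v r" using inj cX by auto
  hence "(col X b - col X' b) $ a = 0" using a by simp
  thus "X $$ (a,b) = X' $$ (a,b)" using cX a b X X' by simp
qed (insert X X', auto)

lemma inj_det:
  fixes N :: "'a::idom mat"
  assumes N: "N \<in> carrier_mat r r" and inj: "\<forall>v\<in>carrier_vec r. N *\<^sub>v v = 0\<^sub>v r \<longrightarrow> v = 0\<^sub>v r"
  shows "det N \<noteq> 0"
  using det_0_iff_vec_prod_zero[OF N] inj by auto

definition minv :: "'a::field mat \<Rightarrow> 'a mat" where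
  "minv N = (1 / det N) \<cdot>\<^sub>m adj_mat N"

lemma minv:
  fixes N :: "'a::field mat"
  assumes N: "N \<in> carrier_mat r r" and d: "det N \<noteq> 0"
  shows "minv N \<in> carrier_mat r r" "N * minv N = 1\<^sub>m r" "minv N * N = 1\<^sub>m r"
proof -
  have aN: "adj_mat N \<in> carrier_mat r r" using adj_mat(1)[OF N] .
  show "minv N \<in> carrier_mat r r" unfolding minv_def using aN by simp
  have "N * minv N = (1 / det N) \<cdot>\<^sub>m (N * adj_mat N)" unfolding minv_def using N aN by (rule mult_smult_distrib)
  also have "\<dots> = 1\<^sub>m r" unfolding adj_mat(2)[OF N] using d by (intro eq_matI) auto
  finally show "N * minv N = 1\<^sub>m r" .
  have "minv N * N = (1 / det N) \<cdot>\<^sub>m (adj_mat N * N)" unfolding minv_def using aN N by (rule mult_smult_assoc_mat)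
  also have "\<dots> = 1\<^sub>m r" unfolding adj_mat(3)[OF N] using d by (intro eq_matI) auto
  finally show "minv N * N = 1\<^sub>m r" .
qed

lemma pow_chain:
  fixes A Y :: "'a::comm_ring_1 mat"
  assumes A: "A \<in> carrier_mat n n" and Y: "Y \<in> carrier_mat n n" and e: "A ^\<^sub>m k = A ^\<^sub>m (k+1) * Y"
  shows "\<exists>W\<in>carrier_mat n n. A ^\<^sub>m k = A ^\<^sub>m (k+j) * W"
proof (induction j)
  case 0 thus ?case using A by (intro bexI[of _ "1\<^sub>m n"]) auto
next
  case (Suc j)
  then obtain W where W: "W \<in> carrier_mat n n" "A ^\<^sub>m k = A ^\<^sub>m (k+j) * W" by blast
  have "A ^\<^sub>m k = (A * A ^\<^sub>m k) * Y" using e pow_mat_Suc_left[OF A, of k] by simp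
  also have "\<dots> = (A * (A ^\<^sub>m (k+j) * W)) * Y" using W(2) by simp
  also have "\<dots> = (A * A ^\<^sub>m (k+j)) * (W * Y)" using A W Y by (simp add: assoc_dim)
  also have "A * A ^\<^sub>m (k+j) = A ^\<^sub>m (k + Suc j)" using pow_mat_Suc_left[OF A, of "k+j"] by simp
  finally show ?case using W Y by (intro bexI[of _ "W * Y"]) auto
qed

theorem theorem4p7:
  fixes A B :: "complex mat" and m n k r :: nat
  assumes A: "A \<in> carrier_mat m m"
    and B: "B \<in> carrier_mat n m"
    and ind: "mat_ind A = k"
    and rk1: "crank (A ^\<^sub>m (k+1)) = r"
    and rk2: "crank (A ^\<^sub>m k) = r"
    and "r \<le> m"
  shows "\<forall>i<n. \<forall>j<m.
     (B * drazin A) $$ (i, j) =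
       (\<Sum>\<alpha>\<in>{\<alpha>\<in>Irm r m. j \<in> \<alpha>}.
          det (principal_submatrix (replace_row (A ^\<^sub>m (k+1)) j (row (B * A ^\<^sub>m k) i)) \<alpha>))
       / (\<Sum>\<alpha>\<in>Irm r m. det (principal_submatrix (A ^\<^sub>m (k+1)) \<alpha>))"
proof -
  note rm = \<open>r \<le> m\<close>
  interpret vs: vec_space "TYPE(complex)" m .
  define P where "P = A ^\<^sub>m k"
  define C where "C = A ^\<^sub>m (k+1)"
  have P: "P \<in> carrier_mat m m" unfolding P_def by (rule pow_carrier_mat[OF A])
  have C: "C \<in> carrier_mat m m" unfolding C_def by (rule pow_carrier_mat[OF A])
  have CPA: "C = P * A" unfolding C_def P_def by simp
  have CAP: "C = A * P" unfolding C_def P_def using pow_mat_Suc_left[OF A, of k] by simp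
  have dims: "dim_row A = m" "dim_col A = m" "dim_row P = m" "dim_col P = m" "dim_row C = m" "dim_col C = m"
    "dim_row B = n" "dim_col B = m" using A P C B by auto
  have rP: "vs.rank P = r" using rk2 A unfolding crank_def P_def by simp
  have rC: "vs.rank C = r" using rk1 A unfolding crank_def C_def by simp
  obtain F1 H1 K1 where F1: "F1 \<in> carrier_mat m r" and H1: "H1 \<in> carrier_mat r m" and K1: "K1 \<in> carrier_mat m r"
    and PFH1: "P = F1 * H1" and FPK1: "F1 = P * K1" and HK1: "H1 * K1 = 1\<^sub>m r"
    and inj1: "\<forall>v\<in>carrier_vec r. F1 *\<^sub>v v = 0\<^sub>v m \<longrightarrow> v = 0\<^sub>v r"
    using vs.rank_factorization[OF P] unfolding rP by blast
  obtain F H K where F: "F \<in> carrier_mat m r" and H: "H \<in> carrier_mat r m" and K: "K \<in> carrier_mat m r"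
    and CFH: "C = F * H" and FCK: "F = C * K" and HK: "H * K = 1\<^sub>m r"
    and inj: "\<forall>v\<in>carrier_vec r. F *\<^sub>v v = 0\<^sub>v m \<longrightarrow> v = 0\<^sub>v r"
    using vs.rank_factorization[OF C] unfolding rC by blast
  have dims2: "dim_row F1 = m" "dim_col F1 = r" "dim_row H1 = r" "dim_col H1 = m" "dim_row K1 = m" "dim_col K1 = r"
    "dim_row F = m" "dim_col F = r" "dim_row H = r" "dim_col H = m" "dim_row K = m" "dim_col K = r"
    using F1 H1 K1 F H K by auto
  note D = dims dims2
  define M' where "M' = H1 * A * K"
  have M': "M' \<in> carrier_mat r r" unfolding M'_def using H1 A K by auto
  have FM: "F = F1 * M'"
  proof -
    have "F = (P * A) * K" using FCK CPA by simp
    also have "\<dots> = F1 * M'" unfolding PFH1 M'_def by (simp add: assoc_dim D)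
    finally show ?thesis .
  qed
  have M'inj: "\<forall>v\<in>carrier_vec r. M' *\<^sub>v v = 0\<^sub>v r \<longrightarrow> v = 0\<^sub>v r"
  proof (intro ballI impI)
    fix v assume v: "v \<in> carrier_vec r" and Mv: "M' *\<^sub>v v = 0\<^sub>v r"
    have "F *\<^sub>v v = F1 *\<^sub>v (M' *\<^sub>v v)" unfolding FM using F1 M' v by (rule assoc_mult_mat_vec)
    also have "\<dots> = 0\<^sub>v m" unfolding Mv using F1 by (intro eq_vecI) (auto simp: scalar_prod_def)
    finally show "v = 0\<^sub>v r" using inj v by auto
  qed
  have dM': "det M' \<noteq> 0" by (rule inj_det[OF M' M'inj])
  note Mi = minv[OF M' dM']
  define Y where "Y = K * minv M' * H1"
  have Y: "Y \<in> carrier_mat m m" unfolding Y_def using K Mi(1) H1 by auto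
  have PCY: "P = C * Y"
  proof -
    have "F * minv M' = F1" unfolding FM using F1 M' Mi by (simp add: assoc_dim D)
    have "C * Y = (C * K) * (minv M' * H1)" unfolding Y_def using Mi(1) by (simp add: assoc_dim D)
    also have "\<dots> = (F * minv M') * H1" unfolding FCK[symmetric] using Mi(1) by (simp add: assoc_dim D)
    also have "\<dots> = P" using \<open>F * minv M' = F1\<close> PFH1 by simp
    finally show ?thesis by simp
  qed
  obtain W where W: "W \<in> carrier_mat m m" and PW: "A ^\<^sub>m k = A ^\<^sub>m (k + (k+1)) * W"
    using pow_chain[OF A Y, of k "k+1"] PCY unfolding P_def C_def by blast
  have CCW: "C = C * C * W"
  proof -
    have "C = A * (A ^\<^sub>m (k + (k+1)) * W)" using CAP PW unfolding P_def by simp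
    also have "\<dots> = (A * A ^\<^sub>m (k + (k+1))) * W" using A W by (simp add: assoc_dim)
    also have "A * A ^\<^sub>m (k + (k+1)) = A ^\<^sub>m ((k+1) + (k+1))" using pow_mat_Suc_left[OF A, of "k + (k+1)"] by simp
    also have "\<dots> = C * C" unfolding C_def by (rule pow_mat_add[OF A])
    finally show ?thesis .
  qed
  have HW: "H = H * F * H * W"
  proof (rule inj_cancel[OF F inj H])
    show "H * F * H * W \<in> carrier_mat r m" using H F W by auto
    have e: "F * H = (F * H) * (F * H) * W" using CCW unfolding CFH .
    have "(F * H) * (F * H) * W = F * (H * F * H * W)" using W by (simp add: assoc_dim D)
    thus "F * H = F * (H * F * H * W)" using e by simp
  qed
  define N where "N = H * F"
  have N: "N \<in> carrier_mat r r" unfolding N_def using H F by auto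
  have dN: "det N \<noteq> 0"
  proof
    assume d0: "det N = 0"
    have "1\<^sub>m r = H * K" using HK by simp
    also have "\<dots> = (H * F * H * W) * K" by (subst HW[symmetric]) (rule refl)
    also have "\<dots> = N * (H * W * K)" unfolding N_def using W by (simp add: assoc_dim D)
    finally have "det (1\<^sub>m r) = det N * det (H * W * K)" using N H W K by (simp add: det_mult[of N r])
    thus False using d0 by simp
  qed
  have dcoef: "coeff (charp C) (m - r) = det N" unfolding CFH N_def by (rule charp_factor[OF F H rm])
  note Ni = minv[OF N dN]
  define Nv where "Nv = minv N"
  have Nv: "Nv \<in> carrier_mat r r" "N * Nv = 1\<^sub>m r" "Nv * N = 1\<^sub>m r" using Ni unfolding Nv_def by auto
  have dims3: "dim_row N = r" "dim_col N = r" "dim_row Nv = r" "dim_col Nv = r" "dim_row W = m" "dim_col W = m"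
    "dim_row Y = m" "dim_col Y = m" using N Nv W Y by auto
  note D = D dims3
  have AC: "A * C = C * A" unfolding C_def using pow_comm[OF A A refl, of "k+1"] by simp
  have AP: "A * P = P * A" unfolding P_def using pow_comm[OF A A refl, of k] by simp
  have CP: "C * P = P * C" using pow_comm[OF A P AP, of "k+1"] unfolding C_def by simp
  define M where "M = H * A * K"
  have M: "M \<in> carrier_mat r r" unfolding M_def using H A K by auto
  have dims4: "dim_row M = r" "dim_col M = r" using M by auto
  note D = D dims4
  have AF: "A * F = F * M"
  proof -
    have "A * F = (A * C) * K" unfolding FCK by (simp add: assoc_dim D)
    also have "\<dots> = (C * A) * K" unfolding AC ..
    also have "\<dots> = F * M" unfolding CFH M_def by (simp add: assoc_dim D)
    finally show ?thesis .
  qed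
  have HA: "H * A = M * H"
  proof (rule inj_cancel[OF F inj])
    show "H * A \<in> carrier_mat r m" "M * H \<in> carrier_mat r m" using H A M by auto
    have "F * (H * A) = C * A" unfolding CFH by (simp add: assoc_dim D)
    also have "\<dots> = A * C" unfolding AC ..
    also have "\<dots> = (A * F) * H" unfolding CFH by (simp add: assoc_dim D)
    also have "\<dots> = F * (M * H)" unfolding AF by (simp add: assoc_dim D)
    finally show "F * (H * A) = F * (M * H)" .
  qed
  have NM: "N * M = M * N"
  proof -
    have "N * M = H * (A * F)" unfolding N_def AF by (simp add: assoc_dim D)
    also have "\<dots> = (H * A) * F" by (simp add: assoc_dim D)
    also have "\<dots> = M * N" unfolding HA N_def by (simp add: assoc_dim D)
    finally show ?thesis .
  qed
  have NvM: "Nv * M = M * Nv"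
  proof -
    have "Nv * M = Nv * M * (N * Nv)" using Nv M by simp
    also have "\<dots> = Nv * (N * M) * Nv" unfolding NM by (simp add: assoc_dim D)
    also have "\<dots> = (Nv * N) * M * Nv" by (simp add: assoc_dim D)
    also have "\<dots> = M * Nv" using Nv M by simp
    finally show ?thesis .
  qed
  have NNv: "N * (Nv * X) = X" if "dim_row X = r" for X
  proof -
    have "N * (Nv * X) = (N * Nv) * X" using that by (simp add: assoc_dim D)
    thus ?thesis using Nv(2) that by simp
  qed
  have NvN: "Nv * (N * X) = X" if "dim_row X = r" for X
  proof -
    have "Nv * (N * X) = (Nv * N) * X" using that by (simp add: assoc_dim D)
    thus ?thesis using Nv(3) that by simp
  qed
  define G where "G = F * Nv * Nv * H"
  have G: "G \<in> carrier_mat m m" unfolding G_def using F Nv H by auto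
  have dims5: "dim_row G = m" "dim_col G = m" using G by auto
  note D = D dims5
  have AG: "A * G = G * A"
  proof -
    have "A * G = (A * F) * Nv * Nv * H" unfolding G_def by (simp add: assoc_dim D)
    also have "\<dots> = (F * M) * Nv * Nv * H" unfolding AF ..
    also have "\<dots> = F * (M * Nv) * Nv * H" by (simp add: assoc_dim D)
    also have "\<dots> = F * (Nv * M) * Nv * H" unfolding NvM ..
    also have "\<dots> = F * Nv * (M * Nv) * H" by (simp add: assoc_dim D)
    also have "\<dots> = F * Nv * (Nv * M) * H" unfolding NvM ..
    also have "\<dots> = F * Nv * Nv * (M * H)" by (simp add: assoc_dim D)
    also have "\<dots> = F * Nv * Nv * (H * A)" unfolding HA ..
    also have "\<dots> = G * A" unfolding G_def by (simp add: assoc_dim D)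
    finally show ?thesis .
  qed
  have CG: "C * G = F * Nv * H"
  proof -
    have "C * G = F * (N * (Nv * (Nv * H)))" unfolding CFH G_def N_def by (simp add: assoc_dim D)
    also have "\<dots> = F * Nv * H" by (simp add: assoc_dim D NNv)
    finally show ?thesis .
  qed
  have GC: "G * C = F * Nv * H"
  proof -
    have "G * C = F * (Nv * (Nv * (N * H)))" unfolding CFH G_def N_def by (simp add: assoc_dim D)
    also have "\<dots> = F * Nv * H" by (simp add: assoc_dim D NvN)
    finally show ?thesis .
  qed
  have GCG: "G * C * G = G"
  proof -
    have "G * C * G = (F * Nv * H) * G" unfolding GC ..
    also have "\<dots> = F * Nv * (N * (Nv * (Nv * H)))" unfolding G_def N_def by (simp add: assoc_dim D)
    also have "\<dots> = G" unfolding G_def by (simp add: assoc_dim D NNv)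
    finally show ?thesis .
  qed
  have GCP: "G * C * P = P"
  proof -
    have "G * C * P = (F * Nv * H) * (F * H * Y)" unfolding GC using PCY CFH by simp
    also have "\<dots> = F * (Nv * (N * (H * Y)))" unfolding N_def by (simp add: assoc_dim D)
    also have "\<dots> = (F * H) * Y" by (simp add: assoc_dim D NvN)
    finally show ?thesis using PCY CFH by simp
  qed
  define Dz where "Dz = G * P"
  have Dz: "Dz \<in> carrier_mat m m" unfolding Dz_def using G P by auto
  have dims6: "dim_row Dz = m" "dim_col Dz = m" using Dz by auto
  note D = D dims6
  have Dr1: "A ^\<^sub>m (k+1) * Dz = A ^\<^sub>m k"
  proof -
    have "A ^\<^sub>m (k+1) * Dz = (C * G) * P" unfolding C_def[symmetric] Dz_def by (simp add: assoc_dim D)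
    also have "C * G = G * C" using CG GC by simp
    also have "G * C * P = P" by (rule GCP)
    finally show ?thesis unfolding P_def .
  qed
  have Dr2: "Dz * A * Dz = Dz"
  proof -
    have "Dz * A * Dz = G * (P * A) * G * P" unfolding Dz_def by (simp add: assoc_dim D)
    also have "\<dots> = (G * C * G) * P" unfolding CPA[symmetric] by (simp add: assoc_dim D)
    also have "\<dots> = Dz" unfolding GCG Dz_def ..
    finally show ?thesis .
  qed
  have Dr3: "A * Dz = Dz * A"
  proof -
    have "A * Dz = (A * G) * P" unfolding Dz_def by (simp add: assoc_dim D)
    also have "\<dots> = G * (A * P)" unfolding AG by (simp add: assoc_dim D)
    also have "\<dots> = G * (P * A)" unfolding AP ..
    also have "\<dots> = Dz * A" unfolding Dz_def by (simp add: assoc_dim D)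
    finally show ?thesis .
  qed
  have isD: "is_drazin_inverse A Dz" unfolding is_drazin_inverse_def ind using Dz Dr1 Dr2 Dr3 dims by simp
  have drA: "drazin A = Dz"
    unfolding drazin_def
  proof (rule the_equality[where P="is_drazin_inverse A", OF isD])
    fix X assume "is_drazin_inverse A X"
    hence X: "X \<in> carrier_mat m m" and X1: "A ^\<^sub>m (k+1) * X = A ^\<^sub>m k" and X2: "X * A * X = X" and X3: "A * X = X * A"
      unfolding is_drazin_inverse_def ind using dims by auto
    show "X = Dz" by (rule drazin_unique[OF A X Dz X1 X2 X3 Dr1 Dr2 Dr3])
  qed
  define U where "U = B * G * G * P"
  have U: "U \<in> carrier_mat n m" unfolding U_def using B G P by auto
  have dims7: "dim_row U = n" "dim_col U = m" using U by auto
  note D = D dims7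
  have GGC: "G = G * G * C"
  proof -
    have cg: "C * G = G * C" using CG GC by simp
    have "G = G * C * G" using GCG by simp
    also have "\<dots> = G * (C * G)" by (simp add: assoc_dim D)
    also have "\<dots> = G * (G * C)" unfolding cg ..
    also have "\<dots> = G * G * C" by (simp add: assoc_dim D)
    finally show ?thesis .
  qed
  have XUC: "B * Dz = U * C"
  proof -
    have "B * Dz = B * (G * G * C) * P" unfolding Dz_def GGC[symmetric] by (simp add: assoc_dim D)
    also have "\<dots> = B * G * G * (C * P)" by (simp add: assoc_dim D)
    also have "\<dots> = B * G * G * (P * C)" unfolding CP ..
    also have "\<dots> = U * C" unfolding U_def by (simp add: assoc_dim D)
    finally show ?thesis .
  qed
  have BPU: "B * P = U * (C * C)"
  proof -
    have "U * (C * C) = (U * C) * C" by (simp add: assoc_dim D)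
    also have "\<dots> = B * (G * P * C)" unfolding XUC[symmetric] Dz_def by (simp add: assoc_dim D)
    also have "G * P * C = G * C * P" using CP by (simp add: assoc_dim D)
    also have "\<dots> = P" by (rule GCP)
    finally show ?thesis by simp
  qed
  define d where "d = coeff (charp C) (m - r)"
  have dnz: "d \<noteq> 0" unfolding d_def dcoef by (rule dN)
  show ?thesis
  proof (intro allI impI)
    fix i j assume i: "i < n" and j: "j < m"
    have CC: "C * C \<in> carrier_mat m m" using C by auto
    let ?Y = "replace_row C j (row (B * P) i)"
    have Yc: "?Y \<in> carrier_mat m m" using C by simp
    have den: "(\<Sum>\<alpha>\<in>Irm r m. det (principal_submatrix (A ^\<^sub>m (k+1)) \<alpha>)) = d"
      unfolding C_def[symmetric] d_def by (rule denom_link[OF C rm])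
    have "(\<Sum>\<alpha>\<in>{\<alpha>\<in>Irm r m. j \<in> \<alpha>}. det (principal_submatrix (replace_row (A ^\<^sub>m (k+1)) j (row (B * A ^\<^sub>m k) i)) \<alpha>))
        = coeff (nump ?Y j) (m - r)"
      unfolding C_def[symmetric] P_def[symmetric] by (rule numer_link[OF Yc rm])
    also have "nump ?Y j = (\<Sum>l<m. Polynomial.smult (U $$ (i,l)) (nump (replace_row C j (row (C * C) l)) j))"
      unfolding BPU by (rule nump_lin[OF C U CC i j])
    also have "coeff \<dots> (m - r) = (\<Sum>l<m. U $$ (i,l) * coeff (nump (replace_row C j (row (C * C) l)) j) (m - r))"
      by (simp add: coeff_sum)
    also have "\<dots> = (\<Sum>l<m. U $$ (i,l) * (C $$ (l,j) * d))"
    proof (rule sum.cong[OF refl])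
      fix l assume "l \<in> {..<m}"
      hence l: "l < m" by simp
      show "U $$ (i,l) * coeff (nump (replace_row C j (row (C * C) l)) j) (m - r) = U $$ (i,l) * (C $$ (l,j) * d)"
        unfolding d_def CFH using key_coeff[OF F H rm l j] by simp
    qed
    also have "\<dots> = (U * C) $$ (i,j) * d"
      using U C i j by (simp add: scalar_prod_def sum_distrib_right lessThan_atLeast0 mult.assoc)
    also have "(U * C) $$ (i,j) = (B * drazin A) $$ (i,j)" unfolding drA XUC ..
    finally have num: "(\<Sum>\<alpha>\<in>{\<alpha>\<in>Irm r m. j \<in> \<alpha>}. det (principal_submatrix (replace_row (A ^\<^sub>m (k+1)) j (row (B * A ^\<^sub>m k) i)) \<alpha>))
        = (B * drazin A) $$ (i,j) * d" .
    show "(B * drazin A) $$ (i, j) =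
       (\<Sum>\<alpha>\<in>{\<alpha>\<in>Irm r m. j \<in> \<alpha>}.
          det (principal_submatrix (replace_row (A ^\<^sub>m (k+1)) j (row (B * A ^\<^sub>m k) i)) \<alpha>))
       / (\<Sum>\<alpha>\<in>Irm r m. det (principal_submatrix (A ^\<^sub>m (k+1)) \<alpha>))"
      unfolding num den using dnz by simp
  qed
qed


end
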